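(* Let $h>0$, $\lambda\in[0,1)$, let $\mu\in\mathcal{M}^+(h,\lambda)$, and let $g:\mathbb{R}\to[0,\infty)$ be non-decreasing with $g(0)=0$. Then $\int g^2\,d\mu\le\left(\frac{2}{1-\lambda}\right)^2\int (g(x)-g(x-h))^2\,d\mu(x).$
   Context: $\mathcal{M}^+(h,\lambda)$ denotes the class of Borel probability measures $\mu$ supported on $[0,\infty)$ such that $\mu([x+h,\infty))\le\lambda\,\mu([x,\infty))$ for all $x\ge0$. *)

theory Defs
  imports "HOL-Probability.Probability"
begin

definition Mplus :: "real \<Rightarrow> real \<Rightarrow> real measure set" where
  "Mplus h lam = {\<mu>. prob_space \<mu> \<and> sets \<mu> = sets borel \<and> measure \<mu> {..<0} = 0 \<and>
      (\<forall>x\<ge>0. measure \<mu> {x+h..} \<le> lam * measure \<mu> {x..})}"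

end

theory Submission
  imports Defs
begin

lemma tail_open:
  fixes M :: "real measure"
  assumes P: "prob_space M" "sets M = sets borel"
    and tail: "\<forall>x\<ge>0. measure M {x+h..} \<le> lam * measure M {x..}"
    and x: "x \<ge> 0"
  shows "measure M {x+h<..} \<le> lam * measure M {x<..}"
proof -
  interpret prob_space M by fact
  have U: "{y<..} = (\<Union>n. {y + 1/real (Suc n)..})" for y :: real
  proof (intro set_eqI iffI)
    fix z assume "z \<in> {y<..}"
    then have "z - y > 0" by simp
    then obtain n where "inverse (real (Suc n)) < z - y" using reals_Archimedean by blast
    then have "1/real (Suc n) < z - y" by (simp add: inverse_eq_divide)
    then have "z \<in> {y + 1/real (Suc n)..}" by simp
    then show "z \<in> (\<Union>n. {y + 1/real (Suc n)..})" by auto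
  next
    fix z assume "z \<in> (\<Union>n. {y + 1/real (Suc n)..})"
    then obtain n where "z \<in> {y + 1/real (Suc n)..}" by blast
    moreover have "1/real (Suc n) > 0" by simp
    ultimately show "z \<in> {y<..}" by (simp only: atLeast_iff greaterThan_iff)
  qed
  have inc: "incseq (\<lambda>n. {y + 1/real (Suc n)..})" for y :: real
  proof (rule incseq_SucI)
    fix n :: nat
    have "1/real (Suc (Suc n)) \<le> 1/real (Suc n)" by (rule frac_le) auto
    then show "{y + 1/real (Suc n)..} \<subseteq> {y + 1/real (Suc (Suc n))..}" by auto
  qed
  have lim: "(\<lambda>n. measure M {y + 1/real (Suc n)..}) \<longlonglongrightarrow> measure M {y<..}" for y :: real
  proof -
    have "range (\<lambda>n. {y + 1/real (Suc n)..}) \<subseteq> sets M" unfolding P(2) by (simp add: image_subset_iff)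
    from finite_Lim_measure_incseq[OF this inc[of y]] show ?thesis by (simp only: U[of y, symmetric])
  qed
  show ?thesis
  proof (rule LIMSEQ_le[OF lim[of "x+h"] tendsto_mult_left[OF lim[of x]]])
    show "\<exists>N. \<forall>n\<ge>N. measure M {x + h + 1 / real (Suc n)..} \<le> lam * measure M {x + 1 / real (Suc n)..}"
    proof (intro exI allI impI)
      fix n :: nat
      have "x + 1/real (Suc n) \<ge> 0" using x by simp
      with tail have "measure M {x + 1/real (Suc n) + h..} \<le> lam * measure M {x + 1/real (Suc n)..}" by blast
      then show "measure M {x + h + 1 / real (Suc n)..} \<le> lam * measure M {x + 1 / real (Suc n)..}"
        by (simp add: ac_simps)
    qed
  qed
qed

lemma upset_shift:
  fixes M :: "real measure" and F :: "real \<Rightarrow> real"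
  assumes P: "prob_space M" "sets M = sets borel"
    and tail: "\<forall>x\<ge>0. measure M {x+h..} \<le> lam * measure M {x..}"
    and F: "mono F" "\<And>y. y \<le> 0 \<Longrightarrow> F y = 0" and t: "t \<ge> 0"
  shows "measure M {x. t < F (x-h)} \<le> lam * measure M {x. t < F x}"
proof -
  define U where "U = {y. t < F y}"
  have Upos: "y > 0" if "y \<in> U" for y
  proof (rule ccontr)
    assume "\<not> y > 0"
    then have "F y = 0" using F(2) by simp
    with that t show False unfolding U_def by simp
  qed
  have shift: "t < F (x-h) \<longleftrightarrow> x - h \<in> U" for x unfolding U_def by simp
  have MU: "measure M {x. t < F x} = measure M U" unfolding U_def ..
  show ?thesis
  proof (cases "U = {}")
    case True
    then have "{x. t < F (x-h)} = {}" using shift by blast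
    then show ?thesis using True MU by simp
  next
    case False
    define a where "a = Inf U"
    have bdd: "bdd_below U" unfolding bdd_below_def using Upos less_imp_le by blast
    have a0: "a \<ge> 0" unfolding a_def using False Upos less_imp_le by (intro cInf_greatest) blast+
    have low: "a \<le> y" if "y \<in> U" for y unfolding a_def by (rule cInf_lower[OF that bdd])
    have up: "z \<in> U" if "y \<in> U" "y \<le> z" for y z
    proof -
      have "F y \<le> F z" using F(1) that(2) by (rule monoD)
      with that(1) show ?thesis unfolding U_def by simp
    qed
    show ?thesis
    proof (cases "a \<in> U")
      case True
      have UA: "U = {a..}" using True low up by blast
      have "{x. t < F (x-h)} = {a+h..}"
      proof (intro set_eqI)
        fix x show "x \<in> {x. t < F (x-h)} \<longleftrightarrow> x \<in> {a+h..}"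
          using shift[of x] UA by (simp; arith)
      qed
      moreover have "measure M {a+h..} \<le> lam * measure M {a..}" using tail a0 by blast
      ultimately show ?thesis using MU UA by simp
    next
      case False
      have UA: "U = {a<..}"
      proof (intro set_eqI iffI)
        fix y assume "y \<in> U" then show "y \<in> {a<..}" using low[of y] False
          by (cases "y = a") auto
      next
        fix y assume "y \<in> {a<..}"
        then have "Inf U < y" by (simp add: a_def)
        then obtain u where "u \<in> U" "u < y" using cInf_less_iff[OF \<open>U \<noteq> {}\<close> bdd] by blast
        then show "y \<in> U" using up less_imp_le by blast
      qed
      have "{x. t < F (x-h)} = {a+h<..}"
      proof (intro set_eqI)
        fix x show "x \<in> {x. t < F (x-h)} \<longleftrightarrow> x \<in> {a+h<..}"
          using shift[of x] UA by (simp; arith)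
      qed
      moreover have "measure M {a+h<..} \<le> lam * measure M {a<..}" using tail_open[OF P tail a0] .
      ultimately show ?thesis using MU UA by simp
    qed
  qed
qed

lemma prod_meas:
  fixes M :: "real measure" and f :: "real \<Rightarrow> real"
  assumes P: "sets M = sets borel" and f: "f \<in> borel_measurable borel"
  shows "(\<lambda>(t, x). indicator {0..<f x} t :: ennreal) \<in> borel_measurable (lborel \<Otimes>\<^sub>M M)"
proof -
  have fM[measurable]: "f \<in> borel_measurable M" using f measurable_cong_sets[OF P refl] by blast
  have eq: "(\<lambda>(t, x). indicator {0..<f x} t :: ennreal) =
     indicator {p \<in> space (lborel \<Otimes>\<^sub>M M). 0 \<le> fst p \<and> fst p < f (snd p)}"
    by (auto simp: indicator_def space_pair_measure fun_eq_iff sets_eq_imp_space_eq[OF P])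
  show ?thesis unfolding eq by measurable
qed

lemma layer:
  fixes M :: "real measure" and f :: "real \<Rightarrow> real"
  assumes P: "prob_space M" "sets M = sets borel" and f: "f \<in> borel_measurable borel"
    and nn: "\<And>x. f x \<ge> 0"
  shows "(\<integral>\<^sup>+x. ennreal (f x) \<partial>M) = (\<integral>\<^sup>+t. (\<integral>\<^sup>+x. indicator {0..<f x} t \<partial>M) \<partial>lborel)"
proof -
  interpret pair_sigma_finite lborel M
    by (intro pair_sigma_finite.intro sigma_finite_lborel prob_space_imp_sigma_finite P)
  have "(\<integral>\<^sup>+x. ennreal (f x) \<partial>M) = (\<integral>\<^sup>+x. (\<integral>\<^sup>+t. indicator {0..<f x} t \<partial>lborel) \<partial>M)"
  proof (rule nn_integral_cong)
    fix x
    have "(\<integral>\<^sup>+t. indicator {0..<f x} t \<partial>lborel) = emeasure lborel {0..<f x}" by simp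
    also have "\<dots> = ennreal (f x)" using nn[of x] by simp
    finally show "ennreal (f x) = (\<integral>\<^sup>+t. indicator {0..<f x} t \<partial>lborel)" by simp
  qed
  also have "\<dots> = (\<integral>\<^sup>+t. (\<integral>\<^sup>+x. indicator {0..<f x} t \<partial>M) \<partial>lborel)"
    by (rule Fubini'[OF prod_meas[OF P(2) f]])
  finally show ?thesis .
qed

lemma shift_int:
  fixes M :: "real measure" and F :: "real \<Rightarrow> real"
  assumes P: "prob_space M" "sets M = sets borel"
    and tail: "\<forall>x\<ge>0. measure M {x+h..} \<le> lam * measure M {x..}"
    and F: "mono F" "\<And>y. y \<le> 0 \<Longrightarrow> F y = 0" "\<And>y. F y \<ge> 0" and lam: "lam \<ge> 0"
  shows "(\<integral>\<^sup>+x. ennreal (F (x-h)) \<partial>M) \<le> ennreal lam * (\<integral>\<^sup>+x. ennreal (F x) \<partial>M)"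
proof -
  interpret prob_space M by fact
  have Fm: "F \<in> borel_measurable borel" using F(1) by (rule borel_measurable_mono)
  have Fhm: "(\<lambda>x. F (x-h)) \<in> borel_measurable borel" using Fm by measurable
  have sp: "space M = UNIV" using sets_eq_imp_space_eq[OF P(2)] by simp
  have pw: "(\<integral>\<^sup>+x. indicator {0..<F (x-h)} t \<partial>M) \<le> ennreal lam * (\<integral>\<^sup>+x. indicator {0..<F x} t \<partial>M)"
    for t :: real
  proof (cases "t \<ge> 0")
    case False
    then have "\<And>x. indicator {0..<F (x-h)} t = (0::ennreal)" by (simp add: indicator_def)
    then show ?thesis by simp
  next
    case True
    have ev: "\<And>G. (\<lambda>x. indicator {0..<G x} t :: ennreal) = indicator {x. t < G x}"
      using True by (auto simp: indicator_def fun_eq_iff)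
    have s1: "{x. t < F (x-h)} \<in> sets M" unfolding P(2) using Fhm by measurable
    have s2: "{x. t < F x} \<in> sets M" unfolding P(2) using Fm by measurable
    have "(\<integral>\<^sup>+x. indicator {0..<F (x-h)} t \<partial>M) = emeasure M {x. t < F (x-h)}"
      using ev[of "\<lambda>x. F (x-h)"] s1 by simp
    also have "\<dots> = ennreal (measure M {x. t < F (x-h)})" by (rule emeasure_eq_measure)
    also have "\<dots> \<le> ennreal (lam * measure M {x. t < F x})"
      using upset_shift[OF P tail F(1,2) True] by (rule ennreal_leI)
    also have "\<dots> = ennreal lam * emeasure M {x. t < F x}"
      using lam by (simp add: emeasure_eq_measure ennreal_mult)
    also have "emeasure M {x. t < F x} = (\<integral>\<^sup>+x. indicator {0..<F x} t \<partial>M)"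
      using ev[of F] s2 by simp
    finally show ?thesis .
  qed
  have m2: "(\<lambda>t. \<integral>\<^sup>+x. indicator {0..<F x} t \<partial>M) \<in> borel_measurable lborel"
    using prod_meas[OF P(2) Fm] by (rule borel_measurable_nn_integral)
  have "(\<integral>\<^sup>+x. ennreal (F (x-h)) \<partial>M) = (\<integral>\<^sup>+t. (\<integral>\<^sup>+x. indicator {0..<F (x-h)} t \<partial>M) \<partial>lborel)"
    using layer[OF P Fhm] F(3) by blast
  also have "\<dots> \<le> (\<integral>\<^sup>+t. ennreal lam * (\<integral>\<^sup>+x. indicator {0..<F x} t \<partial>M) \<partial>lborel)"
    by (rule nn_integral_mono) (rule pw)
  also have "\<dots> = ennreal lam * (\<integral>\<^sup>+t. (\<integral>\<^sup>+x. indicator {0..<F x} t \<partial>M) \<partial>lborel)"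
    using m2 by (rule nn_integral_cmult)
  also have "\<dots> = ennreal lam * (\<integral>\<^sup>+x. ennreal (F x) \<partial>M)"
    using layer[OF P Fm] F(3) by simp
  finally show ?thesis .
qed

lemma key_ineq:
  fixes a b e :: real assumes e: "e > 0"
  shows "(1-e) * a\<^sup>2 \<le> b\<^sup>2 + (1/e) * (a-b)\<^sup>2"
proof -
  have id: "e*b\<^sup>2 + (a-b)\<^sup>2 - e*((1-e)*a\<^sup>2) = (e*a-(a-b))\<^sup>2 + e*(a-b)\<^sup>2"
    by (simp add: power2_eq_square algebra_simps)
  have "0 \<le> (e*a-(a-b))\<^sup>2 + e*(a-b)\<^sup>2" using e by simp
  then have "e*((1-e)*a\<^sup>2) \<le> e*(b\<^sup>2 + (1/e) * (a-b)\<^sup>2)"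
    using id e by (simp add: algebra_simps)
  then show ?thesis using e by (rule mult_left_le_imp_le) 
qed

lemma bounded_case:
  fixes M :: "real measure" and g :: "real \<Rightarrow> real"
  assumes P: "prob_space M" "sets M = sets borel"
    and tail: "\<forall>x\<ge>0. measure M {x+h..} \<le> lam * measure M {x..}"
    and lam: "0 \<le> lam" "lam < 1"
    and g: "\<And>x. g x \<ge> 0" "mono g" "g 0 = 0" and B: "\<And>x. g x \<le> B"
  shows "(\<integral>\<^sup>+ x. ennreal ((g x)\<^sup>2) \<partial>M)
           \<le> ennreal ((2 / (1 - lam))\<^sup>2) * (\<integral>\<^sup>+ x. ennreal ((g x - g (x - h))\<^sup>2) \<partial>M)"
proof -
  interpret prob_space M by fact
  have gb: "g \<in> borel_measurable borel" using g(2) by (rule borel_measurable_mono)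
  have gM[measurable]: "g \<in> borel_measurable M" using gb measurable_cong_sets[OF P(2) refl] by blast
  have g0: "g y = 0" if "y \<le> 0" for y
    using monoD[OF g(2) that] g(1)[of y] g(3) by simp
  define F where "F = (\<lambda>y. (g y)\<^sup>2)"
  have Fm: "mono F" unfolding F_def mono_def using g(1) monoD[OF g(2)] by (auto intro: power_mono)
  have Fsh: "(\<integral>\<^sup>+x. ennreal ((g (x-h))\<^sup>2) \<partial>M) \<le> ennreal lam * (\<integral>\<^sup>+x. ennreal ((g x)\<^sup>2) \<partial>M)"
    using shift_int[OF P tail Fm, of] g0 lam(1) unfolding F_def by simp
  define e where "e = (1 - lam)/2"
  have e: "e > 0" using lam unfolding e_def by simp
  define A where "A = (\<integral>\<^sup>+ x. ennreal ((g x)\<^sup>2) \<partial>M)"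
  define Dn where "Dn = (\<integral>\<^sup>+ x. ennreal ((g x - g (x - h))\<^sup>2) \<partial>M)"
  have "ennreal (1-e) * A = (\<integral>\<^sup>+ x. ennreal (1-e) * ennreal ((g x)\<^sup>2) \<partial>M)"
    unfolding A_def by (rule nn_integral_cmult[symmetric]) measurable
  also have "\<dots> \<le> (\<integral>\<^sup>+ x. ennreal ((g (x-h))\<^sup>2) + ennreal (1/e) * ennreal ((g x - g (x - h))\<^sup>2) \<partial>M)"
  proof (rule nn_integral_mono)
    fix x
    have "ennreal (1-e) * ennreal ((g x)\<^sup>2) = ennreal ((1-e) * (g x)\<^sup>2)"
      using e lam by (simp add: ennreal_mult e_def)
    also have "\<dots> \<le> ennreal ((g (x-h))\<^sup>2 + (1/e) * (g x - g (x - h))\<^sup>2)"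
      by (rule ennreal_leI) (rule key_ineq[OF e])
    also have "\<dots> = ennreal ((g (x-h))\<^sup>2) + ennreal ((1/e) * (g x - g (x - h))\<^sup>2)"
      by (rule ennreal_plus) (use e in auto)
    also have "ennreal ((1/e) * (g x - g (x - h))\<^sup>2) = ennreal (1/e) * ennreal ((g x - g (x - h))\<^sup>2)"
      by (rule ennreal_mult) (use e in auto)
    finally show "ennreal (1-e) * ennreal ((g x)\<^sup>2) \<le> ennreal ((g (x-h))\<^sup>2) + ennreal (1/e) * ennreal ((g x - g (x - h))\<^sup>2)" .
  qed
  also have "\<dots> = (\<integral>\<^sup>+ x. ennreal ((g (x-h))\<^sup>2) \<partial>M) + ennreal (1/e) * Dn"
  proof -
    have tr: "f \<in> borel_measurable M" if "f \<in> borel_measurable borel" for f :: "real \<Rightarrow> ennreal"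
      using that measurable_cong_sets[OF P(2) refl] by blast
    have m1: "(\<lambda>x. ennreal ((g (x-h))\<^sup>2)) \<in> borel_measurable M" by (rule tr) (use gb in measurable)
    have m2: "(\<lambda>x. ennreal ((g x - g (x - h))\<^sup>2)) \<in> borel_measurable M" by (rule tr) (use gb in measurable)
    have m3: "(\<lambda>x. ennreal (1/e) * ennreal ((g x - g (x - h))\<^sup>2)) \<in> borel_measurable M" using m2 by measurable
    show ?thesis unfolding Dn_def
      by (simp add: nn_integral_add[OF m1 m3] nn_integral_cmult[OF m2])
  qed
  also have "\<dots> \<le> ennreal lam * A + ennreal (1/e) * Dn"
    unfolding A_def using Fsh by (rule add_right_mono)
  finally have ineq: "ennreal (1-e) * A \<le> ennreal lam * A + ennreal (1/e) * Dn" .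
  have "A \<le> (\<integral>\<^sup>+ x. ennreal (B\<^sup>2) \<partial>M)"
    unfolding A_def
  proof (rule nn_integral_mono)
    fix x show "ennreal ((g x)\<^sup>2) \<le> ennreal (B\<^sup>2)"
      using g(1)[of x] B[of x] by (intro ennreal_leI power_mono) auto
  qed
  also have "\<dots> = ennreal (B\<^sup>2)" by (simp add: emeasure_space_1)
  finally have "A < \<infinity>" using order.strict_trans1[of A "ennreal (B\<^sup>2)" \<infinity>] by simp
  then obtain a where a: "A = ennreal a" "a \<ge> 0" by (cases A) auto
  show ?thesis
  proof (cases "Dn = \<infinity>")
    case True
    have "ennreal ((2 / (1 - lam))\<^sup>2) \<noteq> 0" using lam by simp
    then show ?thesis using True unfolding Dn_def[symmetric] A_def[symmetric] by (simp add: ennreal_mult_top)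
  next
    case False
    then obtain d where d: "Dn = ennreal d" "d \<ge> 0" by (cases Dn) auto
    have "ennreal ((1-e) * a) \<le> ennreal (lam * a + (1/e) * d)"
    proof -
      have e1: "1 - e \<ge> 0" using lam unfolding e_def by simp
      have r1: "ennreal (1-e) * ennreal a = ennreal ((1-e)*a)" by (rule ennreal_mult[symmetric]) (use e1 a in auto)
      have r2: "ennreal lam * ennreal a = ennreal (lam*a)" by (rule ennreal_mult[symmetric]) (use lam a in auto)
      have r3: "ennreal (1/e) * ennreal d = ennreal ((1/e)*d)" by (rule ennreal_mult[symmetric]) (use e d in auto)
      have r4: "ennreal (lam*a) + ennreal ((1/e)*d) = ennreal (lam*a + (1/e)*d)"
        by (rule ennreal_plus[symmetric]) (use e d lam a in auto)
      show ?thesis using ineq unfolding a(1) d(1) r1 r2 r3 r4 .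
    qed
    then have "(1-e) * a \<le> lam * a + (1/e) * d"
      using a d e lam by (subst (asm) ennreal_le_iff) (auto intro!: add_nonneg_nonneg)
    moreover have "e*a = (1-e)*a - lam*a" unfolding e_def by (simp add: algebra_simps)
    ultimately have "e * a \<le> (1/e) * d" by linarith
    then have "a \<le> d / e\<^sup>2" using e by (simp add: field_simps power2_eq_square)
    also have "d / e\<^sup>2 = (2 / (1 - lam))\<^sup>2 * d" unfolding e_def using lam by (simp add: field_simps power2_eq_square)
    finally have "a \<le> (2 / (1 - lam))\<^sup>2 * d" .
    then show ?thesis unfolding Dn_def[symmetric] A_def[symmetric] a d
    proof -
      have "ennreal ((2 / (1 - lam))\<^sup>2) * ennreal d = ennreal ((2 / (1 - lam))\<^sup>2 * d)"
        by (rule ennreal_mult[symmetric]) (use d in auto)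
      with \<open>a \<le> (2 / (1 - lam))\<^sup>2 * d\<close> show "ennreal a \<le> ennreal ((2 / (1 - lam))\<^sup>2) * ennreal d"
        by (simp add: ennreal_leI)
    qed
  qed
qed

theorem lemma2p1:
  fixes h lam :: real and \<mu> :: "real measure" and g :: "real \<Rightarrow> real"
  assumes "h > 0" and "0 \<le> lam" and "lam < 1"
    and "\<mu> \<in> Mplus h lam"
    and "\<And>x. g x \<ge> 0" and "mono g" and "g 0 = 0"
  shows "(\<integral>\<^sup>+ x. ennreal ((g x)\<^sup>2) \<partial>\<mu>)
           \<le> ennreal ((2 / (1 - lam))\<^sup>2) * (\<integral>\<^sup>+ x. ennreal ((g x - g (x - h))\<^sup>2) \<partial>\<mu>)"
proof -
  note g = assms(5-7)
  have P: "prob_space \<mu>" "sets \<mu> = sets borel"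
    and tail: "\<forall>x\<ge>0. measure \<mu> {x+h..} \<le> lam * measure \<mu> {x..}"
    using assms(4) unfolding Mplus_def by auto
  have gb[measurable]: "g \<in> borel_measurable borel" using g(2) by (rule borel_measurable_mono)
  have tr: "f \<in> borel_measurable \<mu>" if "f \<in> borel_measurable borel" for f :: "real \<Rightarrow> ennreal"
    using that measurable_cong_sets[OF P(2) refl] by blast
  define gn where "gn n x = min (g x) (real n)" for n :: nat and x
  define C where "C = ennreal ((2 / (1 - lam))\<^sup>2) * (\<integral>\<^sup>+ x. ennreal ((g x - g (x - h))\<^sup>2) \<partial>\<mu>)"
  have each: "(\<integral>\<^sup>+ x. ennreal ((gn n x)\<^sup>2) \<partial>\<mu>) \<le> C" for n
  proof -
    have gn: "\<And>x. gn n x \<ge> 0" "mono (gn n)" "gn n 0 = 0" "\<And>x. gn n x \<le> real n"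
    proof -
      show "\<And>x. gn n x \<ge> 0" "gn n 0 = 0" "\<And>x. gn n x \<le> real n" using g unfolding gn_def by auto
      show "mono (gn n)" unfolding gn_def
        by (rule monoI) (rule min.mono[OF monoD[OF g(2)] order_refl])
    qed
    have "(\<integral>\<^sup>+ x. ennreal ((gn n x)\<^sup>2) \<partial>\<mu>)
        \<le> ennreal ((2 / (1 - lam))\<^sup>2) * (\<integral>\<^sup>+ x. ennreal ((gn n x - gn n (x - h))\<^sup>2) \<partial>\<mu>)"
      by (rule bounded_case[OF P tail assms(2,3) gn])
    also have "\<dots> \<le> C" unfolding C_def
    proof (intro mult_left_mono nn_integral_mono ennreal_leI)
      fix x
      have le: "g (x-h) \<le> g x" using monoD[OF g(2)] assms(1) by simp
      have "0 \<le> gn n x - gn n (x - h)" "gn n x - gn n (x - h) \<le> g x - g (x - h)"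
        using le unfolding gn_def by (auto simp: min_def)
      then show "(gn n x - gn n (x - h))\<^sup>2 \<le> (g x - g (x - h))\<^sup>2" by (intro power_mono) auto
    qed simp
    finally show ?thesis .
  qed
  have sup: "ennreal ((g x)\<^sup>2) = (SUP n. ennreal ((gn n x)\<^sup>2))" for x
  proof (rule antisym)
    have "gn (nat \<lceil>g x\<rceil>) x = g x" unfolding gn_def by (simp add: min_def) linarith
    then show "ennreal ((g x)\<^sup>2) \<le> (SUP n. ennreal ((gn n x)\<^sup>2))"
      by (metis (mono_tags, lifting) SUP_upper UNIV_I)
    show "(SUP n. ennreal ((gn n x)\<^sup>2)) \<le> ennreal ((g x)\<^sup>2)"
    proof (rule SUP_least)
      fix n show "ennreal ((gn n x)\<^sup>2) \<le> ennreal ((g x)\<^sup>2)"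
        using g(1)[of x] unfolding gn_def by (intro ennreal_leI power_mono) auto
    qed
  qed
  have inc: "incseq (\<lambda>n x. ennreal ((gn n x)\<^sup>2))"
  proof (intro incseq_SucI le_funI ennreal_leI power_mono)
    fix n x show "gn n x \<le> gn (Suc n) x" "0 \<le> gn n x" using g(1)[of x] unfolding gn_def by auto
  qed
  have "(\<integral>\<^sup>+ x. ennreal ((g x)\<^sup>2) \<partial>\<mu>) = (\<integral>\<^sup>+ x. (SUP n. ennreal ((gn n x)\<^sup>2)) \<partial>\<mu>)"
    by (simp add: sup)
  also have "\<dots> = (SUP n. (\<integral>\<^sup>+ x. ennreal ((gn n x)\<^sup>2) \<partial>\<mu>))"
    by (rule nn_integral_monotone_convergence_SUP[OF inc]) (rule tr, unfold gn_def, measurable)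
  also have "\<dots> \<le> C" by (rule SUP_least) (rule each)
  finally show ?thesis unfolding C_def .
qed

end
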